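(* For every $\alpha>0$, with the initialization described in the context, $\mathbf{V}(0)+\mathbf{G}(0)=\mathbf{H}(0)$. Consequently, for $\alpha=1$, under gradient flow the predictions satisfy at time $0$ $$\frac{d\mathbf{f}}{dt}=-\boldsymbol{\Lambda}(0)(\mathbf{f}(0)-\mathbf{y})=-\mathbf{H}(0)(\mathbf{f}(0)-\mathbf{y}).$$
   Context: Data $(\mathbf{x}_i,y_i)\in\mathbb{R}^d\times\mathbb{R}$, $i=1,\dots,n$. Network $f(\mathbf{x})=\frac{1}{\sqrt m}\sum_{k=1}^m c_k\sigma(g_k\mathbf{v}_k^\top\mathbf{x}/\|\mathbf{v}_k\|_2)$, $\sigma(s)=\max\{s,0\}$; initialization: independently $\mathbf{v}_k(0)\sim N(0,\alpha^2\mathbf{I})$, $c_k$ uniform on $\{-1,1\}$, $g_k(0)=\|\mathbf{v}_k(0)\|_2/\alpha$. Loss $L=\frac12\sum_i(f(\mathbf{x}_i)-y_i)^2$; gradient flow $\frac{d\mathbf{v}_k}{dt}=-\partial L/\partial\mathbf{v}_k$, $\frac{dg_k}{dt}=-\partial L/\partial g_k$ with $c_k$ fixed; $\mathbf{f}(t)$ the vector of predictions. Notation: $\mathbf{x}^{\mathbf{u}}=\mathbf{u}\mathbf{u}^\top\mathbf{x}/\|\mathbf{u}\|_2^2$, $\mathbf{x}^{\mathbf{u}^\perp}=\mathbf{x}-\mathbf{x}^{\mathbf{u}}$, $\mathbb{1}_{ik}(t)=\mathbb{1}\{\mathbf{v}_k(t)^\top\mathbf{x}_i\ge0\}$. $\mathbf{V}_{ij}(t)=\frac1m\sum_k\big(\frac{\alpha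 c_kg_k(t)}{\|\mathbf{v}_k(t)\|_2}\big)^2\langle\mathbf{x}_i^{\mathbf{v}_k(t)^\perp},\mathbf{x}_j^{\mathbf{v}_k(t)^\perp}\rangle\mathbb{1}_{ik}(t)\mathbb{1}_{jk}(t)$, $\mathbf{G}_{ij}(t)=\frac1m\sum_k\sigma(\mathbf{v}_k(t)^\top\mathbf{x}_i)\sigma(\mathbf{v}_k(t)^\top\mathbf{x}_j)/\|\mathbf{v}_k(t)\|_2^2$, $\boldsymbol{\Lambda}(t)=\mathbf{V}(t)/\alpha^2+\mathbf{G}(t)$, and the (un-normalized) neural tangent kernel $\mathbf{H}_{ij}(0)=\frac1m\sum_k\mathbf{x}_i^\top\mathbf{x}_j\mathbb{1}_{ik}(0)\mathbb{1}_{jk}(0)$. *)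

theory Defs
  imports "HOL-Analysis.Analysis"
begin

text \<open>ReLU and the convention sigma'(s) = 1 if s >= 0 (as in the indicator 1_ik of the paper).\<close>
definition relu :: "real \<Rightarrow> real" where
  "relu s = max s 0"

definition relu_deriv :: "real \<Rightarrow> real" where
  "relu_deriv s = (if s \<ge> 0 then 1 else 0)"

definition proj :: "'a::euclidean_space \<Rightarrow> 'a \<Rightarrow> 'a" where
  "proj u x = ((u \<bullet> x) / (norm u)^2) *\<^sub>R u"

definition perp :: "'a::euclidean_space \<Rightarrow> 'a \<Rightarrow> 'a" where
  "perp u x = x - proj u x"

definition ind :: "'a::euclidean_space \<Rightarrow> 'a \<Rightarrow> real" where
  "ind v x = (if v \<bullet> x \<ge> 0 then 1 else 0)"

definition net :: "nat \<Rightarrow> (nat \<Rightarrow> real) \<Rightarrow> (nat \<Rightarrow> real) \<Rightarrow> (nat \<Rightarrow> 'a::euclidean_space) \<Rightarrow> 'a \<Rightarrow> real" where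
  "net m c g v x = (1 / sqrt (real m)) * (\<Sum>k<m. c k * relu (g k * (v k \<bullet> x) / norm (v k)))"

text \<open>Partial derivatives of L = 1/2 sum_i (f(x_i) - y_i)^2 with respect to v_k and g_k
  (chain rule, with the ReLU derivative convention above).\<close>
definition grad_v :: "nat \<Rightarrow> (nat \<Rightarrow> real) \<Rightarrow> nat \<Rightarrow> (nat \<Rightarrow> 'a::euclidean_space) \<Rightarrow> (nat \<Rightarrow> real)
    \<Rightarrow> (nat \<Rightarrow> real) \<Rightarrow> (nat \<Rightarrow> 'a) \<Rightarrow> nat \<Rightarrow> 'a" where
  "grad_v m c n X Y g v k =
     (\<Sum>i<n. ((net m c g v (X i) - Y i) * (1 / sqrt (real m)) * c k
        * relu_deriv (g k * (v k \<bullet> X i) / norm (v k)) * (g k / norm (v k))) *\<^sub>R perp (v k) (X i))"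

definition grad_g :: "nat \<Rightarrow> (nat \<Rightarrow> real) \<Rightarrow> nat \<Rightarrow> (nat \<Rightarrow> 'a::euclidean_space) \<Rightarrow> (nat \<Rightarrow> real)
    \<Rightarrow> (nat \<Rightarrow> real) \<Rightarrow> (nat \<Rightarrow> 'a) \<Rightarrow> nat \<Rightarrow> real" where
  "grad_g m c n X Y g v k =
     (\<Sum>i<n. (net m c g v (X i) - Y i) * (1 / sqrt (real m)) * c k
        * relu_deriv (g k * (v k \<bullet> X i) / norm (v k)) * ((v k \<bullet> X i) / norm (v k)))"

definition grad_flow :: "nat \<Rightarrow> (nat \<Rightarrow> real) \<Rightarrow> nat \<Rightarrow> (nat \<Rightarrow> 'a::euclidean_space) \<Rightarrow> (nat \<Rightarrow> real)
    \<Rightarrow> (real \<Rightarrow> nat \<Rightarrow> 'a) \<Rightarrow> (real \<Rightarrow> nat \<Rightarrow> real) \<Rightarrow> bool" where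
  "grad_flow m c n X Y v g \<longleftrightarrow>
     (\<forall>t\<ge>0. \<forall>k<m.
        ((\<lambda>s. v s k) has_vector_derivative (- grad_v m c n X Y (g t) (v t) k)) (at t within {0..}) \<and>
        ((\<lambda>s. g s k) has_real_derivative (- grad_g m c n X Y (g t) (v t) k)) (at t within {0..}))"

definition Vmat :: "nat \<Rightarrow> (nat \<Rightarrow> real) \<Rightarrow> real \<Rightarrow> (nat \<Rightarrow> real) \<Rightarrow> (nat \<Rightarrow> 'a::euclidean_space)
    \<Rightarrow> (nat \<Rightarrow> 'a) \<Rightarrow> nat \<Rightarrow> nat \<Rightarrow> real" where
  "Vmat m c \<alpha> g v X i j = (1 / real m) * (\<Sum>k<m. (\<alpha> * c k * g k / norm (v k))^2
      * (perp (v k) (X i) \<bullet> perp (v k) (X j)) * ind (v k) (X i) * ind (v k) (X j))"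

definition Gmat :: "nat \<Rightarrow> (nat \<Rightarrow> 'a::euclidean_space) \<Rightarrow> (nat \<Rightarrow> 'a) \<Rightarrow> nat \<Rightarrow> nat \<Rightarrow> real" where
  "Gmat m v X i j = (1 / real m) * (\<Sum>k<m. relu (v k \<bullet> X i) * relu (v k \<bullet> X j) / (norm (v k))^2)"

definition Lam :: "nat \<Rightarrow> (nat \<Rightarrow> real) \<Rightarrow> real \<Rightarrow> (nat \<Rightarrow> real) \<Rightarrow> (nat \<Rightarrow> 'a::euclidean_space)
    \<Rightarrow> (nat \<Rightarrow> 'a) \<Rightarrow> nat \<Rightarrow> nat \<Rightarrow> real" where
  "Lam m c \<alpha> g v X i j = Vmat m c \<alpha> g v X i j / \<alpha>^2 + Gmat m v X i j"

definition Hmat :: "nat \<Rightarrow> (nat \<Rightarrow> 'a::euclidean_space) \<Rightarrow> (nat \<Rightarrow> 'a) \<Rightarrow> nat \<Rightarrow> nat \<Rightarrow> real" where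
  "Hmat m v X i j = (1 / real m) * (\<Sum>k<m. (X i \<bullet> X j) * ind (v k) (X i) * ind (v k) (X j))"

end

theory Submission
  imports Defs
begin

lemma path_norm:
  fixes vf :: "real \<Rightarrow> 'a::euclidean_space"
  assumes "(vf has_vector_derivative V') (at t within S)" "vf t \<noteq> 0"
  shows "((\<lambda>s. norm (vf s)) has_real_derivative (vf t \<bullet> V') / norm (vf t)) (at t within S)"
proof -
  have d: "(vf has_derivative (\<lambda>h. h *\<^sub>R V')) (at t within S)"
    using assms(1) by (simp add: has_vector_derivative_def)
  have "((\<lambda>s. norm (vf s)) has_derivative (\<lambda>h. sgn (vf t) \<bullet> (h *\<^sub>R V'))) (at t within S)"
    using has_derivative_compose[OF d has_derivative_norm[OF assms(2)]] by (simp add: inner_commute)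
  moreover have "(\<lambda>h. sgn (vf t) \<bullet> (h *\<^sub>R V')) = (*) ((vf t \<bullet> V') / norm (vf t))"
    by (auto simp: fun_eq_iff sgn_div_norm field_simps)
  ultimately show ?thesis unfolding has_field_derivative_def by simp
qed

lemma path_inner:
  fixes vf :: "real \<Rightarrow> 'a::euclidean_space"
  assumes "(vf has_vector_derivative V') (at t within S)"
  shows "((\<lambda>s. vf s \<bullet> x) has_real_derivative V' \<bullet> x) (at t within S)"
proof -
  have d: "(vf has_derivative (\<lambda>h. h *\<^sub>R V')) (at t within S)"
    using assms(1) by (simp add: has_vector_derivative_def)
  have "((\<lambda>s. vf s \<bullet> x) has_derivative (\<lambda>h. (h *\<^sub>R V') \<bullet> x)) (at t within S)"
    using has_derivative_inner_left[OF d] by simp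
  moreover have "(\<lambda>h. (h *\<^sub>R V') \<bullet> x) = (*) (V' \<bullet> x)"
    by (auto simp: fun_eq_iff)
  ultimately show ?thesis unfolding has_field_derivative_def by simp
qed

lemma relu_deriv_at:
  assumes "s \<noteq> 0"
  shows "(relu has_real_derivative relu_deriv s) (at s)"
proof (cases "s > 0")
  case True
  have "((\<lambda>x. x) has_real_derivative 1) (at s)" by (rule DERIV_ident)
  then have "(relu has_real_derivative 1) (at s)"
    by (rule has_field_derivative_transform_within_open[where S="{0<..}"])
       (use True in \<open>auto simp: relu_def\<close>)
  then show ?thesis using True by (simp add: relu_deriv_def)
next
  case False
  then have F: "s < 0" using assms by simp
  have "((\<lambda>x. 0) has_real_derivative 0) (at s)" by (rule DERIV_const)
  then have "(relu has_real_derivative 0) (at s)"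
    by (rule has_field_derivative_transform_within_open[where S="{..<0}"])
       (use F in \<open>auto simp: relu_def\<close>)
  then show ?thesis using F by (simp add: relu_deriv_def)
qed

lemma neuron_deriv:
  fixes vf :: "real \<Rightarrow> 'a::euclidean_space"
  assumes v: "(vf has_vector_derivative V') (at t within S)"
    and g: "(gf has_real_derivative G') (at t within S)"
    and nz: "vf t \<noteq> 0" and gp: "gf t > 0" and sx: "vf t \<bullet> x \<noteq> 0"
  shows "((\<lambda>s. relu (gf s * (vf s \<bullet> x) / norm (vf s))) has_real_derivative
     ind (vf t) x * (G' * (vf t \<bullet> x) / norm (vf t) + gf t * (V' \<bullet> perp (vf t) x) / norm (vf t))) (at t within S)"
proof -
  have np: "norm (vf t) > 0" using nz by simp
  have h: "((\<lambda>s. gf s * (vf s \<bullet> x) / norm (vf s)) has_real_derivative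
      ((G' * (vf t \<bullet> x) + V' \<bullet> x * gf t) * norm (vf t) - gf t * (vf t \<bullet> x) * (vf t \<bullet> V') / norm (vf t)) / (norm (vf t) * norm (vf t))) (at t within S)"
    using DERIV_divide[OF DERIV_mult[OF g path_inner[OF v, of x]] path_norm[OF v nz]] nz
    by (simp add: power2_eq_square)
  have h0: "gf t * (vf t \<bullet> x) / norm (vf t) \<noteq> 0" using gp sx nz by simp
  have rd: "relu_deriv (gf t * (vf t \<bullet> x) / norm (vf t)) = ind (vf t) x"
    using gp np by (simp add: relu_deriv_def ind_def zero_le_divide_iff zero_le_mult_iff)
  have eq: "((G' * (vf t \<bullet> x) + V' \<bullet> x * gf t) * norm (vf t) - gf t * (vf t \<bullet> x) * (vf t \<bullet> V') / norm (vf t)) / (norm (vf t) * norm (vf t))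
      = G' * (vf t \<bullet> x) / norm (vf t) + gf t * (V' \<bullet> perp (vf t) x) / norm (vf t)"
    using np by (simp add: perp_def proj_def inner_diff_right inner_commute field_simps power2_eq_square)
  show ?thesis
    using DERIV_chain2[OF relu_deriv_at[OF h0] h] rd eq by simp
qed


lemma perp_inner:
  fixes v :: "'a::euclidean_space"
  assumes "v \<noteq> 0"
  shows "perp v a \<bullet> perp v b = a \<bullet> b - (v \<bullet> a) * (v \<bullet> b) / (norm v)\<^sup>2"
proof -
  have vv: "v \<bullet> v = norm v * norm v" by (metis power2_eq_square power2_norm_eq_inner)
  show ?thesis using assms vv
  by (simp add: perp_def proj_def inner_diff_left inner_diff_right inner_commute
      power2_norm_eq_inner field_simps power2_eq_square)
qed

lemma relu_ind: "relu (v \<bullet> x) = (v \<bullet> x) * ind v x"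
  by (simp add: relu_def ind_def)

lemma perk:
  fixes v :: "'a::euclidean_space"
  assumes "v \<noteq> 0" "c \<in> {-1, 1}" "g = norm v / \<alpha>" "\<alpha> > 0"
  shows "(\<alpha> * c * g / norm v)^2 * (perp v a \<bullet> perp v b) * ind v a * ind v b
     + relu (v \<bullet> a) * relu (v \<bullet> b) / (norm v)^2 = (a \<bullet> b) * ind v a * ind v b"
proof -
  have c2: "c^2 = 1" using assms(2) by auto
  have e: "(\<alpha> * c * g / norm v)^2 = 1" using assms c2 by (simp add: power_mult_distrib power_divide)
  show ?thesis unfolding e using assms(1)
    by (simp add: perp_inner relu_ind field_simps)
qed

lemma part1:
  fixes v0 :: "nat \<Rightarrow> 'a::euclidean_space"
  assumes "\<alpha> > 0"
    and "\<forall>k<m. c k \<in> {-1, 1}"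
    and "\<forall>k<m. v0 k \<noteq> 0"
    and "\<forall>k<m. g0 k = norm (v0 k) / \<alpha>"
  shows "Vmat m c \<alpha> g0 v0 X i j + Gmat m v0 X i j = Hmat m v0 X i j"
proof -
  have "Vmat m c \<alpha> g0 v0 X i j + Gmat m v0 X i j = (1 / real m) * (\<Sum>k<m.
      (\<alpha> * c k * g0 k / norm (v0 k))^2 * (perp (v0 k) (X i) \<bullet> perp (v0 k) (X j)) * ind (v0 k) (X i) * ind (v0 k) (X j)
      + relu (v0 k \<bullet> X i) * relu (v0 k \<bullet> X j) / (norm (v0 k))^2)"
    unfolding Vmat_def Gmat_def by (simp add: sum.distrib distrib_left)
  also have "\<dots> = Hmat m v0 X i j" unfolding Hmat_def
    apply (intro arg_cong2[where f="(*)"] refl sum.cong)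
    subgoal for k using perk[of "v0 k" "c k" "g0 k" \<alpha> "X i" "X j"] assms by auto
    done
  finally show ?thesis .
qed

theorem proposition3p1:
  fixes \<alpha> :: real and m n :: nat
    and X :: "nat \<Rightarrow> 'a::euclidean_space" and Y :: "nat \<Rightarrow> real"
    and c :: "nat \<Rightarrow> real" and v0 :: "nat \<Rightarrow> 'a" and g0 :: "nat \<Rightarrow> real"
  assumes "\<alpha> > 0"
    and "\<forall>k<m. c k \<in> {-1, 1}"
    and "\<forall>k<m. v0 k \<noteq> 0"
    and "\<forall>k<m. g0 k = norm (v0 k) / \<alpha>"
  shows "(\<forall>i<n. \<forall>j<n. Vmat m c \<alpha> g0 v0 X i j + Gmat m v0 X i j = Hmat m v0 X i j) \<and>
         (\<alpha> = 1 \<longrightarrow> (\<forall>i<n. \<forall>k<m. X i \<noteq> 0 \<longrightarrow> v0 k \<bullet> X i \<noteq> 0) \<longrightarrow>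
           (\<forall>v g. grad_flow m c n X Y v g \<and> v 0 = v0 \<and> g 0 = g0 \<longrightarrow>
             (\<forall>i<n.
               ((\<lambda>t. net m c (g t) (v t) (X i)) has_real_derivative
                  (- (\<Sum>j<n. Lam m c \<alpha> g0 v0 X i j * (net m c g0 v0 (X j) - Y j)))) (at 0 within {0..}) \<and>
               (\<Sum>j<n. Lam m c \<alpha> g0 v0 X i j * (net m c g0 v0 (X j) - Y j))
                 = (\<Sum>j<n. Hmat m v0 X i j * (net m c g0 v0 (X j) - Y j)))))"
proof (intro conjI impI allI)
  fix i j assume "i < n" "j < n"
  show "Vmat m c \<alpha> g0 v0 X i j + Gmat m v0 X i j = Hmat m v0 X i j"
    using part1 assms by blast
next
  fix v g i
  assume a1: "\<alpha> = 1" and nz: "\<forall>i<n. \<forall>k<m. X i \<noteq> 0 \<longrightarrow> v0 k \<bullet> X i \<noteq> 0"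
    and gf: "grad_flow m c n X Y v g \<and> v 0 = v0 \<and> g 0 = g0" and i: "i < n"
  define r where "r j = net m c g0 v0 (X j) - Y j" for j
  have g0k: "g0 k = norm (v0 k)" if "k < m" for k using assms(4) a1 that by simp
  have c2: "c k * c k = 1" if "k < m" for k using assms(2) that by auto
  have LamH: "Lam m c \<alpha> g0 v0 X i j = Hmat m v0 X i j" for j
    using part1[OF assms, of X i j] a1 by (simp add: Lam_def)
  show "(\<Sum>j<n. Lam m c \<alpha> g0 v0 X i j * (net m c g0 v0 (X j) - Y j))
                 = (\<Sum>j<n. Hmat m v0 X i j * (net m c g0 v0 (X j) - Y j))"
    by (simp add: LamH)
  define A where "A k j = ind (v0 k) (X i) * ind (v0 k) (X j) *
     ((v0 k \<bullet> X i) * (v0 k \<bullet> X j) / (norm (v0 k))\<^sup>2 + perp (v0 k) (X i) \<bullet> perp (v0 k) (X j))" for k j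
  have LamA: "Lam m c \<alpha> g0 v0 X i j = (1 / real m) * (\<Sum>k<m. A k j)" for j
  proof -
    have "Lam m c \<alpha> g0 v0 X i j = (1 / real m) * (\<Sum>k<m.
      (\<alpha> * c k * g0 k / norm (v0 k))^2 * (perp (v0 k) (X i) \<bullet> perp (v0 k) (X j)) * ind (v0 k) (X i) * ind (v0 k) (X j)
      + relu (v0 k \<bullet> X i) * relu (v0 k \<bullet> X j) / (norm (v0 k))^2)"
      unfolding Lam_def Vmat_def Gmat_def using a1 by (simp add: sum.distrib distrib_left)
    also have "\<dots> = (1 / real m) * (\<Sum>k<m. A k j)"
      apply (intro arg_cong2[where f="(*)"] refl sum.cong)
      subgoal for k using g0k[of k] c2[of k] assms(3) a1
        by (simp add: A_def relu_ind power_mult_distrib power_divide field_simps power2_eq_square)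
      done
    finally show ?thesis .
  qed
  show "((\<lambda>t. net m c (g t) (v t) (X i)) has_real_derivative
                  (- (\<Sum>j<n. Lam m c \<alpha> g0 v0 X i j * (net m c g0 v0 (X j) - Y j)))) (at 0 within {0..})"
  proof (cases "X i = 0")
    case True
    have L0: "Lam m c \<alpha> g0 v0 X i j = 0" for j
      unfolding Lam_def Vmat_def Gmat_def True by (simp add: perp_def proj_def relu_def)
    have "((\<lambda>t. net m c (g t) (v t) (X i)) has_real_derivative 0) (at 0 within {0..})"
      unfolding net_def True by (simp add: relu_def)
    then show ?thesis by (simp add: L0)
  next
    case False
    let ?G = "\<lambda>k. - grad_g m c n X Y (g 0) (v 0) k"
    let ?V = "\<lambda>k. - grad_v m c n X Y (g 0) (v 0) k"
    let ?D = "\<lambda>k. ind (v0 k) (X i) * (?G k * (v0 k \<bullet> X i) / norm (v0 k) + g0 k * (?V k \<bullet> perp (v0 k) (X i)) / norm (v0 k))"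
    have dk: "((\<lambda>t. relu (g t k * (v t k \<bullet> X i) / norm (v t k))) has_real_derivative ?D k) (at 0 within {0..})"
      if k: "k < m" for k
    proof -
      have "((\<lambda>s. v s k) has_vector_derivative ?V k) (at 0 within {0..})"
           "((\<lambda>s. g s k) has_real_derivative ?G k) (at 0 within {0..})"
        using gf k unfolding grad_flow_def by auto
      from neuron_deriv[OF this, of "X i"] show ?thesis
        using gf k assms(3) nz i False g0k[OF k] by auto
    qed
    have "((\<lambda>t. net m c (g t) (v t) (X i)) has_real_derivative (1 / sqrt (real m)) * (\<Sum>k<m. c k * ?D k)) (at 0 within {0..})"
      unfolding net_def
      by (intro DERIV_cmult DERIV_sum) (use dk in auto)
    moreover have "(1 / sqrt (real m)) * (\<Sum>k<m. c k * ?D k) = - (\<Sum>j<n. Lam m c \<alpha> g0 v0 X i j * (net m c g0 v0 (X j) - Y j))"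
    proof -
      have rdj: "relu_deriv (g0 k * (v0 k \<bullet> X j) / norm (v0 k)) = ind (v0 k) (X j)" if "k < m" for k j
        using g0k[OF that] assms(3) that
        by (simp add: relu_deriv_def ind_def)
      have Gk: "?G k = - (1 / sqrt (real m)) * c k * (\<Sum>j<n. r j * ind (v0 k) (X j) * (v0 k \<bullet> X j) / norm (v0 k))"
        if "k < m" for k
        unfolding grad_g_def sum_distrib_left using gf
        by (simp add: sum_negf[symmetric] rdj[OF that] r_def) (rule sum.cong, simp_all)
      have Vk: "?V k \<bullet> perp (v0 k) (X i) = - (1 / sqrt (real m)) * c k * (\<Sum>j<n. r j * ind (v0 k) (X j) * (perp (v0 k) (X j) \<bullet> perp (v0 k) (X i)))"
        if "k < m" for k
      proof -
        have "grad_v m c n X Y (g 0) (v 0) k \<bullet> perp (v0 k) (X i) = (1 / sqrt (real m)) * c k * (\<Sum>j<n. r j * ind (v0 k) (X j) * (perp (v0 k) (X j) \<bullet> perp (v0 k) (X i)))"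
          unfolding grad_v_def inner_sum_left inner_scaleR_left sum_distrib_left
          using gf g0k[OF that] assms(3) that
          by (intro sum.cong) (auto simp: relu_deriv_def ind_def r_def)
        then show ?thesis by (simp add: inner_minus_left)
      qed
      have perk2: "c k * ?D k = - (1 / sqrt (real m)) * (\<Sum>j<n. r j * A k j)" if "k < m" for k
      proof -
        define S1 where "S1 = (\<Sum>j<n. r j * ind (v0 k) (X j) * (v0 k \<bullet> X j) / norm (v0 k))"
        define S2 where "S2 = (\<Sum>j<n. r j * ind (v0 k) (X j) * (perp (v0 k) (X j) \<bullet> perp (v0 k) (X i)))"
        have nv: "norm (v0 k) \<noteq> 0" using assms(3) that by simp
        have sA: "(\<Sum>j<n. r j * A k j) = ind (v0 k) (X i) * (S1 * (v0 k \<bullet> X i) / norm (v0 k)) + ind (v0 k) (X i) * S2"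
          unfolding S1_def S2_def sum_distrib_left sum_distrib_right sum_divide_distrib sum.distrib[symmetric]
          using nv by (intro sum.cong) (auto simp: A_def field_simps power2_eq_square inner_commute)
        have "c k * ?D k = c k * (ind (v0 k) (X i) * ((- (1 / sqrt (real m)) * c k * S1) * (v0 k \<bullet> X i) / norm (v0 k)
            + norm (v0 k) * (- (1 / sqrt (real m)) * c k * S2) / norm (v0 k)))"
          using Gk[OF that] Vk[OF that] g0k[OF that] unfolding S1_def S2_def by simp
        also have "\<dots> = - (1 / sqrt (real m)) * (c k * c k) * (ind (v0 k) (X i) * (S1 * (v0 k \<bullet> X i) / norm (v0 k)) + ind (v0 k) (X i) * S2)"
          using nv by (cases "m = 0") (simp_all add: field_simps)
        finally show ?thesis using sA c2[OF that] by simp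
      qed
      have "(1 / sqrt (real m)) * (\<Sum>k<m. c k * ?D k) = (1 / sqrt (real m)) * (\<Sum>k<m. - (1 / sqrt (real m)) * (\<Sum>j<n. r j * A k j))"
        using perk2 by simp
      also have "\<dots> = - (1 / real m) * (\<Sum>k<m. \<Sum>j<n. r j * A k j)"
        by (simp add: sum_divide_distrib[symmetric] sum_negf)
      also have "\<dots> = - (\<Sum>j<n. Lam m c \<alpha> g0 v0 X i j * r j)"
        by (simp add: LamA sum.swap[of _ "{..<m}"] sum_distrib_left sum_distrib_right mult_ac sum_negf)
      finally show ?thesis by (simp add: r_def)
    qed
    ultimately show ?thesis by simp
  qed
qed

end
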